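(* Let $R_1,R_2$ be rings, $M$ an $(R_1,R_2)$-bimodule and $P$ an $(R_2,R_1)$-bimodule, and let $R=\begin{pmatrix} R_1 & M\\ P & R_2\end{pmatrix}$ be a trivial Morita context, i.e. the context products $M\times P\to R_1$ and $P\times M\to R_2$ are zero ($MP=0$, $PM=0$), with ring structure given by the usual matrix operations. Then $R$ is NJ-symmetric if and only if $R_1$ and $R_2$ are NJ-symmetric.
   Context: Rings are associative with identity. $N(S)$ is the set of nilpotent elements, $J(S)$ the Jacobson radical of a ring $S$. $S$ is NJ-symmetric if for all $a,b,c\in S$, $abc\in N(S)$ implies $bac\in J(S)$. *)

theory Defs
  imports "HOL-Algebra.Ideal"
begin

definition nilpotents :: "('a, 'b) ring_scheme \<Rightarrow> 'a set" where
  "nilpotents S = {a \<in> carrier S. \<exists>n::nat. a [^]\<^bsub>S\<^esub> n = \<zero>\<^bsub>S\<^esub>}"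

definition left_ideal :: "'a set \<Rightarrow> ('a, 'b) ring_scheme \<Rightarrow> bool" where
  "left_ideal I S \<longleftrightarrow> additive_subgroup I S \<and>
     (\<forall>r \<in> carrier S. \<forall>x \<in> I. r \<otimes>\<^bsub>S\<^esub> x \<in> I)"

definition maximal_left_ideal :: "'a set \<Rightarrow> ('a, 'b) ring_scheme \<Rightarrow> bool" where
  "maximal_left_ideal I S \<longleftrightarrow> left_ideal I S \<and> I \<noteq> carrier S \<and>
     (\<forall>K. left_ideal K S \<and> I \<subseteq> K \<and> K \<noteq> carrier S \<longrightarrow> K = I)"

definition jacobson :: "('a, 'b) ring_scheme \<Rightarrow> 'a set" where
  "jacobson S = carrier S \<inter> \<Inter> {I. maximal_left_ideal I S}"

definition NJ_symmetric :: "('a, 'b) ring_scheme \<Rightarrow> bool" where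
  "NJ_symmetric S \<longleftrightarrow> (\<forall>a \<in> carrier S. \<forall>b \<in> carrier S. \<forall>c \<in> carrier S.
     a \<otimes>\<^bsub>S\<^esub> b \<otimes>\<^bsub>S\<^esub> c \<in> nilpotents S \<longrightarrow> b \<otimes>\<^bsub>S\<^esub> a \<otimes>\<^bsub>S\<^esub> c \<in> jacobson S)"

definition bimodule ::
  "('a, 'c) ring_scheme \<Rightarrow> ('b, 'd) ring_scheme \<Rightarrow> ('m, 'e) ring_scheme \<Rightarrow>
   ('a \<Rightarrow> 'm \<Rightarrow> 'm) \<Rightarrow> ('m \<Rightarrow> 'b \<Rightarrow> 'm) \<Rightarrow> bool" where
  "bimodule R S M l r \<longleftrightarrow> abelian_group M \<and>
    (\<forall>x \<in> carrier R. \<forall>m \<in> carrier M. l x m \<in> carrier M) \<and>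
    (\<forall>m \<in> carrier M. \<forall>y \<in> carrier S. r m y \<in> carrier M) \<and>
    (\<forall>x \<in> carrier R. \<forall>m \<in> carrier M. \<forall>n \<in> carrier M. l x (m \<oplus>\<^bsub>M\<^esub> n) = l x m \<oplus>\<^bsub>M\<^esub> l x n) \<and>
    (\<forall>x \<in> carrier R. \<forall>x' \<in> carrier R. \<forall>m \<in> carrier M. l (x \<oplus>\<^bsub>R\<^esub> x') m = l x m \<oplus>\<^bsub>M\<^esub> l x' m) \<and>
    (\<forall>x \<in> carrier R. \<forall>x' \<in> carrier R. \<forall>m \<in> carrier M. l (x \<otimes>\<^bsub>R\<^esub> x') m = l x (l x' m)) \<and>
    (\<forall>m \<in> carrier M. l \<one>\<^bsub>R\<^esub> m = m) \<and>
    (\<forall>y \<in> carrier S. \<forall>m \<in> carrier M. \<forall>n \<in> carrier M. r (m \<oplus>\<^bsub>M\<^esub> n) y = r m y \<oplus>\<^bsub>M\<^esub> r n y) \<and>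
    (\<forall>y \<in> carrier S. \<forall>y' \<in> carrier S. \<forall>m \<in> carrier M. r m (y \<oplus>\<^bsub>S\<^esub> y') = r m y \<oplus>\<^bsub>M\<^esub> r m y') \<and>
    (\<forall>y \<in> carrier S. \<forall>y' \<in> carrier S. \<forall>m \<in> carrier M. r m (y \<otimes>\<^bsub>S\<^esub> y') = r (r m y) y') \<and>
    (\<forall>m \<in> carrier M. r m \<one>\<^bsub>S\<^esub> = m) \<and>
    (\<forall>x \<in> carrier R. \<forall>y \<in> carrier S. \<forall>m \<in> carrier M. r (l x m) y = l x (r m y))"

text \<open>Trivial Morita context ring [[R1, M], [P, R2]] with MP = 0 and PM = 0.
  Elements (a, m, p, b) represent the matrix [[a, m], [p, b]].\<close>
definition morita_ring ::
  "('a, 'c) ring_scheme \<Rightarrow> ('b, 'd) ring_scheme \<Rightarrow> ('m, 'e) ring_scheme \<Rightarrow> ('p, 'f) ring_scheme \<Rightarrow>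
   ('a \<Rightarrow> 'm \<Rightarrow> 'm) \<Rightarrow> ('m \<Rightarrow> 'b \<Rightarrow> 'm) \<Rightarrow> ('b \<Rightarrow> 'p \<Rightarrow> 'p) \<Rightarrow> ('p \<Rightarrow> 'a \<Rightarrow> 'p) \<Rightarrow>
   ('a \<times> 'm \<times> 'p \<times> 'b) ring" where
  "morita_ring R1 R2 M P lM rM lP rP =
    \<lparr> carrier = {(a, m, p, b). a \<in> carrier R1 \<and> m \<in> carrier M \<and> p \<in> carrier P \<and> b \<in> carrier R2},
      mult = (\<lambda>(a, m, p, b) (a', m', p', b').
               (a \<otimes>\<^bsub>R1\<^esub> a', lM a m' \<oplus>\<^bsub>M\<^esub> rM m b', lP b p' \<oplus>\<^bsub>P\<^esub> rP p a', b \<otimes>\<^bsub>R2\<^esub> b')),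
      one = (\<one>\<^bsub>R1\<^esub>, \<zero>\<^bsub>M\<^esub>, \<zero>\<^bsub>P\<^esub>, \<one>\<^bsub>R2\<^esub>),
      zero = (\<zero>\<^bsub>R1\<^esub>, \<zero>\<^bsub>M\<^esub>, \<zero>\<^bsub>P\<^esub>, \<zero>\<^bsub>R2\<^esub>),
      add = (\<lambda>(a, m, p, b) (a', m', p', b').
               (a \<oplus>\<^bsub>R1\<^esub> a', m \<oplus>\<^bsub>M\<^esub> m', p \<oplus>\<^bsub>P\<^esub> p', b \<oplus>\<^bsub>R2\<^esub> b')) \<rparr>"

end

theory Submission
  imports Defs
begin

lemma left_idealD:
  assumes "left_ideal I S"
  shows "I \<subseteq> carrier S" "\<zero>\<^bsub>S\<^esub> \<in> I"
    "\<And>x y. x \<in> I \<Longrightarrow> y \<in> I \<Longrightarrow> x \<oplus>\<^bsub>S\<^esub> y \<in> I"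
    "\<And>r x. r \<in> carrier S \<Longrightarrow> x \<in> I \<Longrightarrow> r \<otimes>\<^bsub>S\<^esub> x \<in> I"
  using assms unfolding left_ideal_def
  by (auto intro: additive_subgroup.a_subset[THEN subsetD] additive_subgroup.zero_closed
        additive_subgroup.a_closed)

lemma left_ideal_one:
  assumes "ring S" "left_ideal L S" "\<one>\<^bsub>S\<^esub> \<in> L"
  shows "L = carrier S"
proof -
  interpret S: ring S by fact
  have "y \<in> L" if "y \<in> carrier S" for y
    using left_idealD(4)[OF assms(2) that assms(3)] that by simp
  thus ?thesis using left_idealD(1)[OF assms(2)] by blast
qed

lemma ring_cancel_aux:
  assumes "ring S" "x \<in> carrier S"
  shows "x \<oplus>\<^bsub>S\<^esub> (\<one>\<^bsub>S\<^esub> \<oplus>\<^bsub>S\<^esub> \<ominus>\<^bsub>S\<^esub> x) = \<one>\<^bsub>S\<^esub>"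
proof -
  interpret S: ring S by fact
  have "x \<oplus>\<^bsub>S\<^esub> (\<one>\<^bsub>S\<^esub> \<oplus>\<^bsub>S\<^esub> \<ominus>\<^bsub>S\<^esub> x) = \<one>\<^bsub>S\<^esub> \<oplus>\<^bsub>S\<^esub> (x \<oplus>\<^bsub>S\<^esub> \<ominus>\<^bsub>S\<^esub> x)"
    using assms(2) by (simp add: S.a_lcomm)
  also have "\<dots> = \<one>\<^bsub>S\<^esub>" using assms(2) by (simp add: S.r_neg)
  finally show ?thesis .
qed

lemma left_idealI':
  assumes "ring S" and "I \<subseteq> carrier S" and "\<zero>\<^bsub>S\<^esub> \<in> I"
    and "\<And>x y. x \<in> I \<Longrightarrow> y \<in> I \<Longrightarrow> x \<oplus>\<^bsub>S\<^esub> y \<in> I"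
    and "\<And>r x. r \<in> carrier S \<Longrightarrow> x \<in> I \<Longrightarrow> r \<otimes>\<^bsub>S\<^esub> x \<in> I"
  shows "left_ideal I S"
proof -
  interpret S: ring S by fact
  have "subgroup I (add_monoid S)"
  proof (rule S.add.subgroupI)
    show "I \<subseteq> carrier S" using assms(2) by auto
    show "I \<noteq> {}" using assms by blast
    fix a assume a: "a \<in> I"
    hence ac: "a \<in> carrier S" using assms by blast
    have "\<ominus>\<^bsub>S\<^esub> a = (\<ominus>\<^bsub>S\<^esub> \<one>\<^bsub>S\<^esub>) \<otimes>\<^bsub>S\<^esub> a" using ac by (simp add: S.l_minus)
    then show "\<ominus>\<^bsub>S\<^esub> a \<in> I" using assms(5)[OF _ a] by simp
  next
    fix a b assume "a \<in> I" "b \<in> I" thus "a \<oplus>\<^bsub>S\<^esub> b \<in> I" using assms by simp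
  qed
  thus ?thesis unfolding left_ideal_def using assms additive_subgroupI by blast
qed


locale mctx =
  R1: ring R1 + R2: ring R2
  for R1 :: "('a, 'c) ring_scheme" and R2 :: "('b, 'd) ring_scheme" +
  fixes M :: "('m, 'e) ring_scheme" and P :: "('p, 'f) ring_scheme"
    and lM :: "'a \<Rightarrow> 'm \<Rightarrow> 'm" and rM :: "'m \<Rightarrow> 'b \<Rightarrow> 'm"
    and lP :: "'b \<Rightarrow> 'p \<Rightarrow> 'p" and rP :: "'p \<Rightarrow> 'a \<Rightarrow> 'p"
  assumes bM: "bimodule R1 R2 M lM rM" and bP: "bimodule R2 R1 P lP rP"
begin

sublocale M: abelian_group M using bM unfolding bimodule_def by blast
sublocale P: abelian_group P using bP unfolding bimodule_def by blast

lemma lM_cl [simp]: "x \<in> carrier R1 \<Longrightarrow> m \<in> carrier M \<Longrightarrow> lM x m \<in> carrier M"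
  using bM by (simp add: bimodule_def)
lemma rM_cl [simp]: "m \<in> carrier M \<Longrightarrow> y \<in> carrier R2 \<Longrightarrow> rM m y \<in> carrier M"
  using bM by (simp add: bimodule_def)
lemma lM_add: "x \<in> carrier R1 \<Longrightarrow> m \<in> carrier M \<Longrightarrow> n \<in> carrier M \<Longrightarrow> lM x (m \<oplus>\<^bsub>M\<^esub> n) = lM x m \<oplus>\<^bsub>M\<^esub> lM x n"
  using bM by (simp add: bimodule_def)
lemma lM_add2: "x \<in> carrier R1 \<Longrightarrow> x' \<in> carrier R1 \<Longrightarrow> m \<in> carrier M \<Longrightarrow> lM (x \<oplus>\<^bsub>R1\<^esub> x') m = lM x m \<oplus>\<^bsub>M\<^esub> lM x' m"
  using bM by (simp add: bimodule_def)
lemma lM_mult: "x \<in> carrier R1 \<Longrightarrow> x' \<in> carrier R1 \<Longrightarrow> m \<in> carrier M \<Longrightarrow> lM (x \<otimes>\<^bsub>R1\<^esub> x') m = lM x (lM x' m)"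
  using bM by (simp add: bimodule_def)
lemma lM_one [simp]: "m \<in> carrier M \<Longrightarrow> lM \<one>\<^bsub>R1\<^esub> m = m"
  using bM by (simp add: bimodule_def)
lemma rM_add: "y \<in> carrier R2 \<Longrightarrow> m \<in> carrier M \<Longrightarrow> n \<in> carrier M \<Longrightarrow> rM (m \<oplus>\<^bsub>M\<^esub> n) y = rM m y \<oplus>\<^bsub>M\<^esub> rM n y"
  using bM by (simp add: bimodule_def)
lemma rM_add2: "y \<in> carrier R2 \<Longrightarrow> y' \<in> carrier R2 \<Longrightarrow> m \<in> carrier M \<Longrightarrow> rM m (y \<oplus>\<^bsub>R2\<^esub> y') = rM m y \<oplus>\<^bsub>M\<^esub> rM m y'"
  using bM by (simp add: bimodule_def)
lemma rM_mult: "y \<in> carrier R2 \<Longrightarrow> y' \<in> carrier R2 \<Longrightarrow> m \<in> carrier M \<Longrightarrow> rM m (y \<otimes>\<^bsub>R2\<^esub> y') = rM (rM m y) y'"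
  using bM by (simp add: bimodule_def)
lemma rM_one [simp]: "m \<in> carrier M \<Longrightarrow> rM m \<one>\<^bsub>R2\<^esub> = m"
  using bM by (simp add: bimodule_def)
lemma M_comm: "x \<in> carrier R1 \<Longrightarrow> y \<in> carrier R2 \<Longrightarrow> m \<in> carrier M \<Longrightarrow> rM (lM x m) y = lM x (rM m y)"
  using bM by (simp add: bimodule_def)

lemma lP_cl [simp]: "x \<in> carrier R2 \<Longrightarrow> m \<in> carrier P \<Longrightarrow> lP x m \<in> carrier P"
  using bP by (simp add: bimodule_def)
lemma rP_cl [simp]: "m \<in> carrier P \<Longrightarrow> y \<in> carrier R1 \<Longrightarrow> rP m y \<in> carrier P"
  using bP by (simp add: bimodule_def)
lemma lP_add: "x \<in> carrier R2 \<Longrightarrow> m \<in> carrier P \<Longrightarrow> n \<in> carrier P \<Longrightarrow> lP x (m \<oplus>\<^bsub>P\<^esub> n) = lP x m \<oplus>\<^bsub>P\<^esub> lP x n"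
  using bP by (simp add: bimodule_def)
lemma lP_add2: "x \<in> carrier R2 \<Longrightarrow> x' \<in> carrier R2 \<Longrightarrow> m \<in> carrier P \<Longrightarrow> lP (x \<oplus>\<^bsub>R2\<^esub> x') m = lP x m \<oplus>\<^bsub>P\<^esub> lP x' m"
  using bP by (simp add: bimodule_def)
lemma lP_mult: "x \<in> carrier R2 \<Longrightarrow> x' \<in> carrier R2 \<Longrightarrow> m \<in> carrier P \<Longrightarrow> lP (x \<otimes>\<^bsub>R2\<^esub> x') m = lP x (lP x' m)"
  using bP by (simp add: bimodule_def)
lemma lP_one [simp]: "m \<in> carrier P \<Longrightarrow> lP \<one>\<^bsub>R2\<^esub> m = m"
  using bP by (simp add: bimodule_def)
lemma rP_add: "y \<in> carrier R1 \<Longrightarrow> m \<in> carrier P \<Longrightarrow> n \<in> carrier P \<Longrightarrow> rP (m \<oplus>\<^bsub>P\<^esub> n) y = rP m y \<oplus>\<^bsub>P\<^esub> rP n y"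
  using bP by (simp add: bimodule_def)
lemma rP_add2: "y \<in> carrier R1 \<Longrightarrow> y' \<in> carrier R1 \<Longrightarrow> m \<in> carrier P \<Longrightarrow> rP m (y \<oplus>\<^bsub>R1\<^esub> y') = rP m y \<oplus>\<^bsub>P\<^esub> rP m y'"
  using bP by (simp add: bimodule_def)
lemma rP_mult: "y \<in> carrier R1 \<Longrightarrow> y' \<in> carrier R1 \<Longrightarrow> m \<in> carrier P \<Longrightarrow> rP m (y \<otimes>\<^bsub>R1\<^esub> y') = rP (rP m y) y'"
  using bP by (simp add: bimodule_def)
lemma rP_one [simp]: "m \<in> carrier P \<Longrightarrow> rP m \<one>\<^bsub>R1\<^esub> = m"
  using bP by (simp add: bimodule_def)
lemma P_comm: "x \<in> carrier R2 \<Longrightarrow> y \<in> carrier R1 \<Longrightarrow> m \<in> carrier P \<Longrightarrow> rP (lP x m) y = lP x (rP m y)"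
  using bP by (simp add: bimodule_def)

lemma lM_zero [simp]: "x \<in> carrier R1 \<Longrightarrow> lM x \<zero>\<^bsub>M\<^esub> = \<zero>\<^bsub>M\<^esub>"
  using lM_add[of x "\<zero>\<^bsub>M\<^esub>" "\<zero>\<^bsub>M\<^esub>"] by simp
lemma rM_zero [simp]: "y \<in> carrier R2 \<Longrightarrow> rM \<zero>\<^bsub>M\<^esub> y = \<zero>\<^bsub>M\<^esub>"
  using rM_add[of y "\<zero>\<^bsub>M\<^esub>" "\<zero>\<^bsub>M\<^esub>"] by simp
lemma lM_zero2 [simp]: "m \<in> carrier M \<Longrightarrow> lM \<zero>\<^bsub>R1\<^esub> m = \<zero>\<^bsub>M\<^esub>"
  using lM_add2[of "\<zero>\<^bsub>R1\<^esub>" "\<zero>\<^bsub>R1\<^esub>" m] by simp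
lemma rM_zero2 [simp]: "m \<in> carrier M \<Longrightarrow> rM m \<zero>\<^bsub>R2\<^esub> = \<zero>\<^bsub>M\<^esub>"
  using rM_add2[of "\<zero>\<^bsub>R2\<^esub>" "\<zero>\<^bsub>R2\<^esub>" m] by simp
lemma lP_zero [simp]: "x \<in> carrier R2 \<Longrightarrow> lP x \<zero>\<^bsub>P\<^esub> = \<zero>\<^bsub>P\<^esub>"
  using lP_add[of x "\<zero>\<^bsub>P\<^esub>" "\<zero>\<^bsub>P\<^esub>"] by simp
lemma rP_zero [simp]: "y \<in> carrier R1 \<Longrightarrow> rP \<zero>\<^bsub>P\<^esub> y = \<zero>\<^bsub>P\<^esub>"
  using rP_add[of y "\<zero>\<^bsub>P\<^esub>" "\<zero>\<^bsub>P\<^esub>"] by simp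
lemma lP_zero2 [simp]: "m \<in> carrier P \<Longrightarrow> lP \<zero>\<^bsub>R2\<^esub> m = \<zero>\<^bsub>P\<^esub>"
  using lP_add2[of "\<zero>\<^bsub>R2\<^esub>" "\<zero>\<^bsub>R2\<^esub>" m] by simp
lemma rP_zero2 [simp]: "m \<in> carrier P \<Longrightarrow> rP m \<zero>\<^bsub>R1\<^esub> = \<zero>\<^bsub>P\<^esub>"
  using rP_add2[of "\<zero>\<^bsub>R1\<^esub>" "\<zero>\<^bsub>R1\<^esub>" m] by simp

abbreviation "R \<equiv> morita_ring R1 R2 M P lM rM lP rP"

lemma R_carrier [simp]: "(a, m, p, b) \<in> carrier R \<longleftrightarrow> a \<in> carrier R1 \<and> m \<in> carrier M \<and> p \<in> carrier P \<and> b \<in> carrier R2"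
  by (simp add: morita_ring_def)
lemma R_mult [simp]: "(a, m, p, b) \<otimes>\<^bsub>R\<^esub> (a', m', p', b') =
   (a \<otimes>\<^bsub>R1\<^esub> a', lM a m' \<oplus>\<^bsub>M\<^esub> rM m b', lP b p' \<oplus>\<^bsub>P\<^esub> rP p a', b \<otimes>\<^bsub>R2\<^esub> b')"
  by (simp add: morita_ring_def)
lemma R_add [simp]: "(a, m, p, b) \<oplus>\<^bsub>R\<^esub> (a', m', p', b') =
   (a \<oplus>\<^bsub>R1\<^esub> a', m \<oplus>\<^bsub>M\<^esub> m', p \<oplus>\<^bsub>P\<^esub> p', b \<oplus>\<^bsub>R2\<^esub> b')"
  by (simp add: morita_ring_def)
lemma R_one [simp]: "\<one>\<^bsub>R\<^esub> = (\<one>\<^bsub>R1\<^esub>, \<zero>\<^bsub>M\<^esub>, \<zero>\<^bsub>P\<^esub>, \<one>\<^bsub>R2\<^esub>)"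
  by (simp add: morita_ring_def)
lemma R_zero [simp]: "\<zero>\<^bsub>R\<^esub> = (\<zero>\<^bsub>R1\<^esub>, \<zero>\<^bsub>M\<^esub>, \<zero>\<^bsub>P\<^esub>, \<zero>\<^bsub>R2\<^esub>)"
  by (simp add: morita_ring_def)

lemma R_ring: "ring R"
proof (rule ringI)
  show "abelian_group R"
  proof (rule abelian_groupI)
    fix x y assume "x \<in> carrier R" "y \<in> carrier R"
    thus "x \<oplus>\<^bsub>R\<^esub> y \<in> carrier R" by (cases x, cases y) auto
  next
    show "\<zero>\<^bsub>R\<^esub> \<in> carrier R" by simp
  next
    fix x y z assume "x \<in> carrier R" "y \<in> carrier R" "z \<in> carrier R"
    thus "x \<oplus>\<^bsub>R\<^esub> y \<oplus>\<^bsub>R\<^esub> z = x \<oplus>\<^bsub>R\<^esub> (y \<oplus>\<^bsub>R\<^esub> z)"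
      by (cases x, cases y, cases z) (auto simp: R1.a_assoc R2.a_assoc M.a_assoc P.a_assoc)
  next
    fix x y assume "x \<in> carrier R" "y \<in> carrier R"
    thus "x \<oplus>\<^bsub>R\<^esub> y = y \<oplus>\<^bsub>R\<^esub> x"
      by (cases x, cases y) (auto simp: R1.a_comm R2.a_comm M.a_comm P.a_comm)
  next
    fix x assume "x \<in> carrier R"
    thus "\<zero>\<^bsub>R\<^esub> \<oplus>\<^bsub>R\<^esub> x = x" by (cases x) auto
  next
    fix x assume "x \<in> carrier R"
    then obtain a m p b where x: "x = (a, m, p, b)" and c: "a \<in> carrier R1" "m \<in> carrier M" "p \<in> carrier P" "b \<in> carrier R2"
      by (cases x) auto
    show "\<exists>y\<in>carrier R. y \<oplus>\<^bsub>R\<^esub> x = \<zero>\<^bsub>R\<^esub>"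
      by (rule bexI[of _ "(\<ominus>\<^bsub>R1\<^esub> a, \<ominus>\<^bsub>M\<^esub> m, \<ominus>\<^bsub>P\<^esub> p, \<ominus>\<^bsub>R2\<^esub> b)"])
         (use x c in \<open>auto simp: R1.l_neg R2.l_neg M.l_neg P.l_neg\<close>)
  qed
next
  show "monoid R"
  proof (rule monoidI)
    fix x y assume "x \<in> carrier R" "y \<in> carrier R"
    thus "x \<otimes>\<^bsub>R\<^esub> y \<in> carrier R" by (cases x, cases y) auto
  next
    show "\<one>\<^bsub>R\<^esub> \<in> carrier R" by simp
  next
    fix x y z assume "x \<in> carrier R" "y \<in> carrier R" "z \<in> carrier R"
    thus "x \<otimes>\<^bsub>R\<^esub> y \<otimes>\<^bsub>R\<^esub> z = x \<otimes>\<^bsub>R\<^esub> (y \<otimes>\<^bsub>R\<^esub> z)"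
      by (cases x, cases y, cases z) (auto simp: R1.m_assoc R2.m_assoc M.a_assoc P.a_assoc
          lM_add rM_add lP_add rP_add lM_mult rM_mult lP_mult rP_mult M_comm P_comm)
  next
    fix x assume "x \<in> carrier R"
    thus "\<one>\<^bsub>R\<^esub> \<otimes>\<^bsub>R\<^esub> x = x" by (cases x) auto
  next
    fix x assume "x \<in> carrier R"
    thus "x \<otimes>\<^bsub>R\<^esub> \<one>\<^bsub>R\<^esub> = x" by (cases x) auto
  qed
next
  fix x y z assume "x \<in> carrier R" "y \<in> carrier R" "z \<in> carrier R"
  thus "(x \<oplus>\<^bsub>R\<^esub> y) \<otimes>\<^bsub>R\<^esub> z = x \<otimes>\<^bsub>R\<^esub> z \<oplus>\<^bsub>R\<^esub> y \<otimes>\<^bsub>R\<^esub> z"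
    by (cases x, cases y, cases z) (auto simp: R1.l_distr R2.l_distr M.a_ac P.a_ac
          lM_add rM_add lP_add rP_add lM_add2 rM_add2 lP_add2 rP_add2)
next
  fix x y z assume "x \<in> carrier R" "y \<in> carrier R" "z \<in> carrier R"
  thus "z \<otimes>\<^bsub>R\<^esub> (x \<oplus>\<^bsub>R\<^esub> y) = z \<otimes>\<^bsub>R\<^esub> x \<oplus>\<^bsub>R\<^esub> z \<otimes>\<^bsub>R\<^esub> y"
    by (cases x, cases y, cases z) (auto simp: R1.r_distr R2.r_distr M.a_ac P.a_ac
          lM_add rM_add lP_add rP_add lM_add2 rM_add2 lP_add2 rP_add2)
qed


sublocale RR: ring R by (rule R_ring)

lemma pow_diag:
  assumes "a \<in> carrier R1" "m \<in> carrier M" "p \<in> carrier P" "b \<in> carrier R2"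
  shows "\<exists>m' p'. (a, m, p, b) [^]\<^bsub>R\<^esub> (n::nat) = (a [^]\<^bsub>R1\<^esub> n, m', p', b [^]\<^bsub>R2\<^esub> n)
     \<and> m' \<in> carrier M \<and> p' \<in> carrier P"
proof (induction n)
  case 0 thus ?case by simp
next
  case (Suc n)
  then obtain m' p' where "(a, m, p, b) [^]\<^bsub>R\<^esub> n = (a [^]\<^bsub>R1\<^esub> n, m', p', b [^]\<^bsub>R2\<^esub> n)"
    "m' \<in> carrier M" "p' \<in> carrier P" by blast
  thus ?case using assms by simp
qed

lemma nil_char:
  assumes x: "x \<in> carrier R"
  shows "x \<in> nilpotents R \<longleftrightarrow> fst x \<in> nilpotents R1 \<and> snd (snd (snd x)) \<in> nilpotents R2"
proof -
  obtain a m p b where xe: "x = (a, m, p, b)" by (cases x) auto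
  have c: "a \<in> carrier R1" "m \<in> carrier M" "p \<in> carrier P" "b \<in> carrier R2" using x xe by auto
  show ?thesis
  proof
    assume "x \<in> nilpotents R"
    then obtain n where "x [^]\<^bsub>R\<^esub> (n::nat) = \<zero>\<^bsub>R\<^esub>" unfolding nilpotents_def by blast
    moreover obtain m' p' where "x [^]\<^bsub>R\<^esub> n = (a [^]\<^bsub>R1\<^esub> n, m', p', b [^]\<^bsub>R2\<^esub> n)"
      using pow_diag[OF c] xe by blast
    ultimately have "a [^]\<^bsub>R1\<^esub> n = \<zero>\<^bsub>R1\<^esub>" "b [^]\<^bsub>R2\<^esub> n = \<zero>\<^bsub>R2\<^esub>" by simp_all
    thus "fst x \<in> nilpotents R1 \<and> snd (snd (snd x)) \<in> nilpotents R2"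
      using xe c unfolding nilpotents_def by auto
  next
    assume "fst x \<in> nilpotents R1 \<and> snd (snd (snd x)) \<in> nilpotents R2"
    then obtain k j where k: "a [^]\<^bsub>R1\<^esub> (k::nat) = \<zero>\<^bsub>R1\<^esub>" and j: "b [^]\<^bsub>R2\<^esub> (j::nat) = \<zero>\<^bsub>R2\<^esub>"
      using xe unfolding nilpotents_def by auto
    have ak: "a [^]\<^bsub>R1\<^esub> (k + j) = \<zero>\<^bsub>R1\<^esub>"
      using k c by (simp add: R1.nat_pow_mult[symmetric])
    have bj: "b [^]\<^bsub>R2\<^esub> (k + j) = \<zero>\<^bsub>R2\<^esub>"
      using j c by (simp add: R2.nat_pow_mult[symmetric] add.commute[of k j])
    obtain m' p' where e: "x [^]\<^bsub>R\<^esub> (k + j) = (a [^]\<^bsub>R1\<^esub> (k + j), m', p', b [^]\<^bsub>R2\<^esub> (k + j))"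
      and mp: "m' \<in> carrier M" "p' \<in> carrier P"
      using pow_diag[OF c] xe by blast
    have "x [^]\<^bsub>R\<^esub> ((k + j) + (k + j)) = x [^]\<^bsub>R\<^esub> (k + j) \<otimes>\<^bsub>R\<^esub> x [^]\<^bsub>R\<^esub> (k + j)"
      using x by (simp add: RR.nat_pow_mult)
    also have "\<dots> = \<zero>\<^bsub>R\<^esub>" using e ak bj mp by simp
    finally show "x \<in> nilpotents R" using x unfolding nilpotents_def by blast
  qed
qed

definition box :: "'a set \<Rightarrow> 'b set \<Rightarrow> ('a \<times> 'm \<times> 'p \<times> 'b) set" where
  "box K1 K2 = {(a, m, p, b). a \<in> K1 \<and> m \<in> carrier M \<and> p \<in> carrier P \<and> b \<in> K2}"

lemma box_mem [simp]: "(a, m, p, b) \<in> box K1 K2 \<longleftrightarrow> a \<in> K1 \<and> m \<in> carrier M \<and> p \<in> carrier P \<and> b \<in> K2"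
  by (simp add: box_def)

lemma box_left_ideal:
  assumes K1: "left_ideal K1 R1" and K2: "left_ideal K2 R2"
  shows "left_ideal (box K1 K2) R"
proof (rule left_idealI'[OF R_ring])
  note A = left_idealD[OF K1] and B = left_idealD[OF K2]
  show "box K1 K2 \<subseteq> carrier R" using A(1) B(1) by (auto simp: box_def)
  show "\<zero>\<^bsub>R\<^esub> \<in> box K1 K2" using A(2) B(2) by simp
  fix x y assume "x \<in> box K1 K2" "y \<in> box K1 K2"
  thus "x \<oplus>\<^bsub>R\<^esub> y \<in> box K1 K2" using A(3) B(3) by (cases x, cases y) auto
next
  note A = left_idealD[OF K1] and B = left_idealD[OF K2]
  fix r x assume "r \<in> carrier R" "x \<in> box K1 K2"
  thus "r \<otimes>\<^bsub>R\<^esub> x \<in> box K1 K2" using A(1,4) B(1,4) by (cases x, cases r) auto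
qed

lemma carrier_left_ideal: "ring S \<Longrightarrow> left_ideal (carrier S) S"
  by (rule left_idealI') (auto intro: ring.ring_simprules)


lemma one_notin: "ring S \<Longrightarrow> left_ideal I S \<Longrightarrow> I \<noteq> carrier S \<Longrightarrow> \<one>\<^bsub>S\<^esub> \<notin> I"
  using left_ideal_one by blast

lemma max_box1:
  assumes mx: "maximal_left_ideal I R1"
  shows "maximal_left_ideal (box I (carrier R2)) R"
proof -
  have I: "left_ideal I R1" "I \<noteq> carrier R1"
    and Imax: "\<And>K. left_ideal K R1 \<Longrightarrow> I \<subseteq> K \<Longrightarrow> K \<noteq> carrier R1 \<Longrightarrow> K = I"
    using mx unfolding maximal_left_ideal_def by blast+
  note ID = left_idealD[OF I(1)]
  have li: "left_ideal (box I (carrier R2)) R"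
    by (rule box_left_ideal[OF I(1) carrier_left_ideal[OF R2.ring_axioms]])
  have one: "\<one>\<^bsub>R1\<^esub> \<notin> I" using one_notin[OF R1.ring_axioms I] .
  have ne: "box I (carrier R2) \<noteq> carrier R"
  proof
    assume "box I (carrier R2) = carrier R"
    hence "\<one>\<^bsub>R\<^esub> \<in> box I (carrier R2)" by simp
    thus False using one by simp
  qed
  have "L = box I (carrier R2)" if L: "left_ideal L R" "box I (carrier R2) \<subseteq> L" "L \<noteq> carrier R" for L
  proof (rule ccontr)
    assume "L \<noteq> box I (carrier R2)"
    then obtain x where xL: "x \<in> L" and xb: "x \<notin> box I (carrier R2)" using L(2) by blast
    note LD = left_idealD[OF L(1)]
    obtain a m p b where xe: "x = (a, m, p, b)" by (cases x) auto
    have c: "a \<in> carrier R1" "m \<in> carrier M" "p \<in> carrier P" "b \<in> carrier R2"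
      using LD(1) xL xe by auto
    have aI: "a \<notin> I" using xb xe c by simp
    define I' where "I' = {a. \<exists>m p b. (a, m, p, b) \<in> L}"
    have li': "left_ideal I' R1"
    proof (rule left_idealI'[OF R1.ring_axioms])
      show "I' \<subseteq> carrier R1" using LD(1) unfolding I'_def by auto
      show "\<zero>\<^bsub>R1\<^esub> \<in> I'" using LD(2) unfolding I'_def by auto
      fix u v assume "u \<in> I'" "v \<in> I'"
      then obtain m1 p1 b1 m2 p2 b2 where "(u, m1, p1, b1) \<in> L" "(v, m2, p2, b2) \<in> L"
        unfolding I'_def by blast
      from LD(3)[OF this] show "u \<oplus>\<^bsub>R1\<^esub> v \<in> I'" unfolding I'_def by auto
    next
      fix r u assume r: "r \<in> carrier R1" and "u \<in> I'"
      then obtain m1 p1 b1 where u: "(u, m1, p1, b1) \<in> L" unfolding I'_def by blast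
      have "(r, \<zero>\<^bsub>M\<^esub>, \<zero>\<^bsub>P\<^esub>, \<zero>\<^bsub>R2\<^esub>) \<in> carrier R" using r by simp
      from LD(4)[OF this u] show "r \<otimes>\<^bsub>R1\<^esub> u \<in> I'" unfolding I'_def by auto
    qed
    have sub: "I \<subseteq> I'"
    proof
      fix u assume "u \<in> I"
      hence "(u, \<zero>\<^bsub>M\<^esub>, \<zero>\<^bsub>P\<^esub>, \<zero>\<^bsub>R2\<^esub>) \<in> L" using L(2) by auto
      thus "u \<in> I'" unfolding I'_def by blast
    qed
    have "a \<in> I'" using xL xe unfolding I'_def by blast
    hence "I' \<noteq> I" using aI by blast
    hence "I' = carrier R1" using Imax[OF li' sub] by blast
    hence "\<one>\<^bsub>R1\<^esub> \<in> I'" by simp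
    then obtain m1 p1 b1 where o: "(\<one>\<^bsub>R1\<^esub>, m1, p1, b1) \<in> L" unfolding I'_def by blast
    have c1: "m1 \<in> carrier M" "p1 \<in> carrier P" "b1 \<in> carrier R2" using LD(1) o by auto
    have "(\<zero>\<^bsub>R1\<^esub>, \<ominus>\<^bsub>M\<^esub> m1, \<ominus>\<^bsub>P\<^esub> p1, \<one>\<^bsub>R2\<^esub> \<ominus>\<^bsub>R2\<^esub> b1) \<in> L"
      using L(2) ID(2) c1 by auto
    from LD(3)[OF o this] have "\<one>\<^bsub>R\<^esub> \<in> L"
      using c1 by (simp add: M.r_neg P.r_neg R2.minus_eq ring_cancel_aux[OF R2.ring_axioms])
    hence "L = carrier R" using left_ideal_one[OF R_ring L(1)] by blast
    thus False using L(3) by blast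
  qed
  thus ?thesis unfolding maximal_left_ideal_def using li ne by blast
qed

lemma max_box2:
  assumes mx: "maximal_left_ideal I R2"
  shows "maximal_left_ideal (box (carrier R1) I) R"
proof -
  have I: "left_ideal I R2" "I \<noteq> carrier R2"
    and Imax: "\<And>K. left_ideal K R2 \<Longrightarrow> I \<subseteq> K \<Longrightarrow> K \<noteq> carrier R2 \<Longrightarrow> K = I"
    using mx unfolding maximal_left_ideal_def by blast+
  note ID = left_idealD[OF I(1)]
  have li: "left_ideal (box (carrier R1) I) R"
    by (rule box_left_ideal[OF carrier_left_ideal[OF R1.ring_axioms] I(1)])
  have one: "\<one>\<^bsub>R2\<^esub> \<notin> I" using one_notin[OF R2.ring_axioms I] .
  have ne: "box (carrier R1) I \<noteq> carrier R"
  proof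
    assume "box (carrier R1) I = carrier R"
    hence "\<one>\<^bsub>R\<^esub> \<in> box (carrier R1) I" by simp
    thus False using one by simp
  qed
  have "L = box (carrier R1) I" if L: "left_ideal L R" "box (carrier R1) I \<subseteq> L" "L \<noteq> carrier R" for L
  proof (rule ccontr)
    assume "L \<noteq> box (carrier R1) I"
    then obtain x where xL: "x \<in> L" and xb: "x \<notin> box (carrier R1) I" using L(2) by blast
    note LD = left_idealD[OF L(1)]
    obtain a m p b where xe: "x = (a, m, p, b)" by (cases x) auto
    have c: "a \<in> carrier R1" "m \<in> carrier M" "p \<in> carrier P" "b \<in> carrier R2"
      using LD(1) xL xe by auto
    have aI: "b \<notin> I" using xb xe c by simp
    define I' where "I' = {b. \<exists>a m p. (a, m, p, b) \<in> L}"
    have li': "left_ideal I' R2"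
    proof (rule left_idealI'[OF R2.ring_axioms])
      show "I' \<subseteq> carrier R2" using LD(1) unfolding I'_def by auto
      show "\<zero>\<^bsub>R2\<^esub> \<in> I'" using LD(2) unfolding I'_def by auto
      fix u v assume "u \<in> I'" "v \<in> I'"
      then obtain m1 p1 b1 m2 p2 b2 where "(b1, m1, p1, u) \<in> L" "(b2, m2, p2, v) \<in> L"
        unfolding I'_def by blast
      from LD(3)[OF this] show "u \<oplus>\<^bsub>R2\<^esub> v \<in> I'" unfolding I'_def by auto
    next
      fix r u assume r: "r \<in> carrier R2" and "u \<in> I'"
      then obtain m1 p1 b1 where u: "(b1, m1, p1, u) \<in> L" unfolding I'_def by blast
      have "(\<zero>\<^bsub>R1\<^esub>, \<zero>\<^bsub>M\<^esub>, \<zero>\<^bsub>P\<^esub>, r) \<in> carrier R" using r by simp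
      from LD(4)[OF this u] show "r \<otimes>\<^bsub>R2\<^esub> u \<in> I'" unfolding I'_def by auto
    qed
    have sub: "I \<subseteq> I'"
    proof
      fix u assume "u \<in> I"
      hence "(\<zero>\<^bsub>R1\<^esub>, \<zero>\<^bsub>M\<^esub>, \<zero>\<^bsub>P\<^esub>, u) \<in> L" using L(2) by auto
      thus "u \<in> I'" unfolding I'_def by blast
    qed
    have "b \<in> I'" using xL xe unfolding I'_def by blast
    hence "I' \<noteq> I" using aI by blast
    hence "I' = carrier R2" using Imax[OF li' sub] by blast
    hence "\<one>\<^bsub>R2\<^esub> \<in> I'" by simp
    then obtain m1 p1 b1 where o: "(b1, m1, p1, \<one>\<^bsub>R2\<^esub>) \<in> L" unfolding I'_def by blast
    have c1: "m1 \<in> carrier M" "p1 \<in> carrier P" "b1 \<in> carrier R1" using LD(1) o by auto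
    have "(\<one>\<^bsub>R1\<^esub> \<ominus>\<^bsub>R1\<^esub> b1, \<ominus>\<^bsub>M\<^esub> m1, \<ominus>\<^bsub>P\<^esub> p1, \<zero>\<^bsub>R2\<^esub>) \<in> L"
      using L(2) ID(2) c1 by auto
    from LD(3)[OF o this] have "\<one>\<^bsub>R\<^esub> \<in> L"
      using c1 by (simp add: M.r_neg P.r_neg R1.minus_eq ring_cancel_aux[OF R1.ring_axioms])
    hence "L = carrier R" using left_ideal_one[OF R_ring L(1)] by blast
    thus False using L(3) by blast
  qed
  thus ?thesis unfolding maximal_left_ideal_def using li ne by blast
qed

lemma J_to1:
  assumes "(a, m, p, b) \<in> jacobson R" shows "a \<in> jacobson R1"
proof -
  have "(a, m, p, b) \<in> box I (carrier R2)" if "maximal_left_ideal I R1" for I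
    using assms max_box1[OF that] unfolding jacobson_def by blast
  thus ?thesis using assms unfolding jacobson_def by auto
qed

lemma J_to2:
  assumes "(a, m, p, b) \<in> jacobson R" shows "b \<in> jacobson R2"
proof -
  have "(a, m, p, b) \<in> box (carrier R1) I" if "maximal_left_ideal I R2" for I
    using assms max_box2[OF that] unfolding jacobson_def by blast
  thus ?thesis using assms unfolding jacobson_def by auto
qed


lemmas Rs = R_one R_zero R_add R_mult
declare Rs [simp del]

lemma nil_in_max:
  assumes mx: "maximal_left_ideal L R" and c: "m \<in> carrier M" "p \<in> carrier P"
  shows "(\<zero>\<^bsub>R1\<^esub>, m, p, \<zero>\<^bsub>R2\<^esub>) \<in> L"
proof (rule ccontr)
  define n where "n = (\<zero>\<^bsub>R1\<^esub>, m, p, \<zero>\<^bsub>R2\<^esub>)"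
  assume "(\<zero>\<^bsub>R1\<^esub>, m, p, \<zero>\<^bsub>R2\<^esub>) \<notin> L"
  hence nL: "n \<notin> L" unfolding n_def .
  have nc: "n \<in> carrier R" using c unfolding n_def by simp
  have L: "left_ideal L R" "L \<noteq> carrier R"
    and Lmax: "\<And>K. left_ideal K R \<Longrightarrow> L \<subseteq> K \<Longrightarrow> K \<noteq> carrier R \<Longrightarrow> K = L"
    using mx unfolding maximal_left_ideal_def by blast+
  note LD = left_idealD[OF L(1)]
  define L' where "L' = {l \<oplus>\<^bsub>R\<^esub> r \<otimes>\<^bsub>R\<^esub> n | l r. l \<in> L \<and> r \<in> carrier R}"
  have li': "left_ideal L' R"
  proof (rule left_idealI'[OF R_ring])
    show "L' \<subseteq> carrier R" using LD(1) nc unfolding L'_def by auto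
    have "\<zero>\<^bsub>R\<^esub> = \<zero>\<^bsub>R\<^esub> \<oplus>\<^bsub>R\<^esub> \<zero>\<^bsub>R\<^esub> \<otimes>\<^bsub>R\<^esub> n" by (simp only: RR.l_null[OF nc] RR.r_zero[OF RR.zero_closed])
    thus "\<zero>\<^bsub>R\<^esub> \<in> L'" using LD(2) unfolding L'_def by blast
  next
    fix x y assume "x \<in> L'" "y \<in> L'"
    then obtain l1 r1 l2 r2 where e: "x = l1 \<oplus>\<^bsub>R\<^esub> r1 \<otimes>\<^bsub>R\<^esub> n" "y = l2 \<oplus>\<^bsub>R\<^esub> r2 \<otimes>\<^bsub>R\<^esub> n"
      and h: "l1 \<in> L" "r1 \<in> carrier R" "l2 \<in> L" "r2 \<in> carrier R" unfolding L'_def by blast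
    have hc: "l1 \<in> carrier R" "l2 \<in> carrier R" using h LD(1) by auto
    have "x \<oplus>\<^bsub>R\<^esub> y = (l1 \<oplus>\<^bsub>R\<^esub> l2) \<oplus>\<^bsub>R\<^esub> (r1 \<oplus>\<^bsub>R\<^esub> r2) \<otimes>\<^bsub>R\<^esub> n"
      using e h hc nc by (simp add: RR.l_distr RR.a_ac)
    thus "x \<oplus>\<^bsub>R\<^esub> y \<in> L'" using h LD(3) unfolding L'_def by blast
  next
    fix s x assume s: "s \<in> carrier R" and "x \<in> L'"
    then obtain l r where e: "x = l \<oplus>\<^bsub>R\<^esub> r \<otimes>\<^bsub>R\<^esub> n" and h: "l \<in> L" "r \<in> carrier R"
      unfolding L'_def by blast
    have hc: "l \<in> carrier R" using h LD(1) by auto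
    have "s \<otimes>\<^bsub>R\<^esub> x = s \<otimes>\<^bsub>R\<^esub> l \<oplus>\<^bsub>R\<^esub> (s \<otimes>\<^bsub>R\<^esub> r) \<otimes>\<^bsub>R\<^esub> n"
      using e h hc nc s by (simp add: RR.r_distr RR.m_assoc)
    thus "s \<otimes>\<^bsub>R\<^esub> x \<in> L'" using h s LD(4) unfolding L'_def by blast
  qed
  have sub: "L \<subseteq> L'"
  proof
    fix l assume l: "l \<in> L"
    hence lc: "l \<in> carrier R" using LD(1) by blast
    have "l = l \<oplus>\<^bsub>R\<^esub> \<zero>\<^bsub>R\<^esub> \<otimes>\<^bsub>R\<^esub> n"
      by (simp only: RR.l_null[OF nc] RR.r_zero[OF lc])
    thus "l \<in> L'" using l unfolding L'_def by blast
  qed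
  have "n = \<zero>\<^bsub>R\<^esub> \<oplus>\<^bsub>R\<^esub> \<one>\<^bsub>R\<^esub> \<otimes>\<^bsub>R\<^esub> n" by (simp only: RR.l_one[OF nc] RR.l_zero[OF nc])
  hence "n \<in> L'" using LD(2) unfolding L'_def by blast
  hence "L' \<noteq> L" using nL by blast
  hence "L' = carrier R" using Lmax[OF li' sub] by blast
  hence "\<one>\<^bsub>R\<^esub> \<in> L'" by simp
  then obtain l r where e: "\<one>\<^bsub>R\<^esub> = l \<oplus>\<^bsub>R\<^esub> r \<otimes>\<^bsub>R\<^esub> n" and h: "l \<in> L" "r \<in> carrier R"
    unfolding L'_def by blast
  have lc: "l \<in> carrier R" using h LD(1) by auto
  define u where "u = r \<otimes>\<^bsub>R\<^esub> n"
  have uc: "u \<in> carrier R" using h nc unfolding u_def by simp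
  have uu: "u \<otimes>\<^bsub>R\<^esub> u = \<zero>\<^bsub>R\<^esub>"
  proof -
    obtain a1 m1 p1 b1 where "r = (a1, m1, p1, b1)" by (cases r) auto
    thus ?thesis using h c unfolding u_def n_def by (simp add: Rs)
  qed
  have e1: "l \<oplus>\<^bsub>R\<^esub> u = \<one>\<^bsub>R\<^esub>" using e unfolding u_def by simp
  have "u \<otimes>\<^bsub>R\<^esub> l \<oplus>\<^bsub>R\<^esub> u \<otimes>\<^bsub>R\<^esub> u = u \<otimes>\<^bsub>R\<^esub> (l \<oplus>\<^bsub>R\<^esub> u)"
    using uc lc by (simp add: RR.r_distr)
  also have "\<dots> = u" using e1 uc by simp
  finally have ul: "u \<otimes>\<^bsub>R\<^esub> l = u" using uu uc lc by simp
  have "(\<one>\<^bsub>R\<^esub> \<oplus>\<^bsub>R\<^esub> u) \<otimes>\<^bsub>R\<^esub> l = l \<oplus>\<^bsub>R\<^esub> u"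
    using uc lc ul by (simp add: RR.l_distr)
  also have "\<dots> = \<one>\<^bsub>R\<^esub>" by (rule e1)
  finally have "\<one>\<^bsub>R\<^esub> \<in> L" using LD(4)[OF _ h(1), of "\<one>\<^bsub>R\<^esub> \<oplus>\<^bsub>R\<^esub> u"] uc by simp
  hence "L = carrier R" using left_ideal_one[OF R_ring L(1)] by blast
  thus False using L(2) by blast
qed


lemma J_from:
  assumes x: "x \<in> carrier R" and j1: "fst x \<in> jacobson R1" and j2: "snd (snd (snd x)) \<in> jacobson R2"
  shows "x \<in> jacobson R"
proof -
  have "x \<in> L" if mx: "maximal_left_ideal L R" for L
  proof -
    have L: "left_ideal L R" "L \<noteq> carrier R"
      and Lmax: "\<And>K. left_ideal K R \<Longrightarrow> L \<subseteq> K \<Longrightarrow> K \<noteq> carrier R \<Longrightarrow> K = L"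
      using mx unfolding maximal_left_ideal_def by blast+
    note LD = left_idealD[OF L(1)]
    define I1 where "I1 = {a \<in> carrier R1. (a, \<zero>\<^bsub>M\<^esub>, \<zero>\<^bsub>P\<^esub>, \<zero>\<^bsub>R2\<^esub>) \<in> L}"
    define I2 where "I2 = {b \<in> carrier R2. (\<zero>\<^bsub>R1\<^esub>, \<zero>\<^bsub>M\<^esub>, \<zero>\<^bsub>P\<^esub>, b) \<in> L}"
    have fwd: "a \<in> I1 \<and> b \<in> I2" if y: "(a, m, p, b) \<in> L" for a m p b
    proof -
      have c: "a \<in> carrier R1" "m \<in> carrier M" "p \<in> carrier P" "b \<in> carrier R2" using y LD(1) by auto
      have "(\<one>\<^bsub>R1\<^esub>, \<zero>\<^bsub>M\<^esub>, \<zero>\<^bsub>P\<^esub>, \<zero>\<^bsub>R2\<^esub>) \<otimes>\<^bsub>R\<^esub> (a, m, p, b) \<in> L" using LD(4) y by simp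
      hence "(a, m, \<zero>\<^bsub>P\<^esub>, \<zero>\<^bsub>R2\<^esub>) \<in> L" using c by (simp add: Rs)
      from LD(3)[OF this nil_in_max[OF mx M.a_inv_closed[OF c(2)] P.zero_closed]]
      have "(a, \<zero>\<^bsub>M\<^esub>, \<zero>\<^bsub>P\<^esub>, \<zero>\<^bsub>R2\<^esub>) \<in> L" using c by (simp add: Rs M.r_neg)
      moreover
      have "(\<zero>\<^bsub>R1\<^esub>, \<zero>\<^bsub>M\<^esub>, \<zero>\<^bsub>P\<^esub>, \<one>\<^bsub>R2\<^esub>) \<otimes>\<^bsub>R\<^esub> (a, m, p, b) \<in> L" using LD(4) y by simp
      hence "(\<zero>\<^bsub>R1\<^esub>, \<zero>\<^bsub>M\<^esub>, p, b) \<in> L" using c by (simp add: Rs)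
      from LD(3)[OF this nil_in_max[OF mx M.zero_closed P.a_inv_closed[OF c(3)]]]
      have "(\<zero>\<^bsub>R1\<^esub>, \<zero>\<^bsub>M\<^esub>, \<zero>\<^bsub>P\<^esub>, b) \<in> L" using c by (simp add: Rs P.r_neg)
      ultimately show ?thesis using c unfolding I1_def I2_def by blast
    qed
    have bwd: "(a, m, p, b) \<in> L" if "a \<in> I1" "b \<in> I2" "m \<in> carrier M" "p \<in> carrier P" for a m p b
    proof -
      have c: "a \<in> carrier R1" "b \<in> carrier R2" using that unfolding I1_def I2_def by auto
      have "(a, \<zero>\<^bsub>M\<^esub>, \<zero>\<^bsub>P\<^esub>, \<zero>\<^bsub>R2\<^esub>) \<oplus>\<^bsub>R\<^esub> (\<zero>\<^bsub>R1\<^esub>, \<zero>\<^bsub>M\<^esub>, \<zero>\<^bsub>P\<^esub>, b) \<in> L"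
        using that LD(3) unfolding I1_def I2_def by blast
      hence "(a, \<zero>\<^bsub>M\<^esub>, \<zero>\<^bsub>P\<^esub>, b) \<in> L" using c by (simp add: Rs)
      from LD(3)[OF this nil_in_max[OF mx that(3,4)]] show ?thesis using c that by (simp add: Rs)
    qed
    have z1: "\<zero>\<^bsub>R1\<^esub> \<in> I1" and z2: "\<zero>\<^bsub>R2\<^esub> \<in> I2" using LD(2) unfolding I1_def I2_def by (auto simp: Rs)
    have li1: "left_ideal I1 R1"
    proof (rule left_idealI'[OF R1.ring_axioms])
      show "I1 \<subseteq> carrier R1" "\<zero>\<^bsub>R1\<^esub> \<in> I1" using z1 unfolding I1_def by auto
      fix u v assume "u \<in> I1" "v \<in> I1"
      hence "(u, \<zero>\<^bsub>M\<^esub>, \<zero>\<^bsub>P\<^esub>, \<zero>\<^bsub>R2\<^esub>) \<oplus>\<^bsub>R\<^esub> (v, \<zero>\<^bsub>M\<^esub>, \<zero>\<^bsub>P\<^esub>, \<zero>\<^bsub>R2\<^esub>) \<in> L" "u \<in> carrier R1" "v \<in> carrier R1"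
        using LD(3) unfolding I1_def by auto
      thus "u \<oplus>\<^bsub>R1\<^esub> v \<in> I1" unfolding I1_def by (simp add: Rs)
    next
      fix r u assume "r \<in> carrier R1" "u \<in> I1"
      thus "r \<otimes>\<^bsub>R1\<^esub> u \<in> I1" using LD(4)[of "(r, \<zero>\<^bsub>M\<^esub>, \<zero>\<^bsub>P\<^esub>, \<zero>\<^bsub>R2\<^esub>)" "(u, \<zero>\<^bsub>M\<^esub>, \<zero>\<^bsub>P\<^esub>, \<zero>\<^bsub>R2\<^esub>)"]
        unfolding I1_def by (auto simp: Rs)
    qed
    have li2: "left_ideal I2 R2"
    proof (rule left_idealI'[OF R2.ring_axioms])
      show "I2 \<subseteq> carrier R2" "\<zero>\<^bsub>R2\<^esub> \<in> I2" using z2 unfolding I2_def by auto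
      fix u v assume "u \<in> I2" "v \<in> I2"
      hence "(\<zero>\<^bsub>R1\<^esub>, \<zero>\<^bsub>M\<^esub>, \<zero>\<^bsub>P\<^esub>, u) \<oplus>\<^bsub>R\<^esub> (\<zero>\<^bsub>R1\<^esub>, \<zero>\<^bsub>M\<^esub>, \<zero>\<^bsub>P\<^esub>, v) \<in> L" "u \<in> carrier R2" "v \<in> carrier R2"
        using LD(3) unfolding I2_def by auto
      thus "u \<oplus>\<^bsub>R2\<^esub> v \<in> I2" unfolding I2_def by (simp add: Rs)
    next
      fix r u assume "r \<in> carrier R2" "u \<in> I2"
      thus "r \<otimes>\<^bsub>R2\<^esub> u \<in> I2" using LD(4)[of "(\<zero>\<^bsub>R1\<^esub>, \<zero>\<^bsub>M\<^esub>, \<zero>\<^bsub>P\<^esub>, r)" "(\<zero>\<^bsub>R1\<^esub>, \<zero>\<^bsub>M\<^esub>, \<zero>\<^bsub>P\<^esub>, u)"]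
        unfolding I2_def by (auto simp: Rs)
    qed
    have Lsub: "L \<subseteq> box K1 K2" if "I1 \<subseteq> K1" "I2 \<subseteq> K2" for K1 K2
    proof
      fix y assume y: "y \<in> L"
      obtain a m p b where ye: "y = (a, m, p, b)" by (cases y) auto
      show "y \<in> box K1 K2" using fwd[of a m p b] y ye LD(1) that by auto
    qed
    obtain a m p b where xe: "x = (a, m, p, b)" by (cases x) auto
    have c: "a \<in> carrier R1" "m \<in> carrier M" "p \<in> carrier P" "b \<in> carrier R2" using x xe by auto
    have aJ: "a \<in> jacobson R1" and bJ: "b \<in> jacobson R2" using j1 j2 xe by auto
    have "a \<in> I1"
    proof (cases "I1 = carrier R1")
      case True thus ?thesis using c by simp
    next
      case False
      have "maximal_left_ideal I1 R1" unfolding maximal_left_ideal_def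
      proof (intro conjI allI impI li1 False)
        fix K assume K: "left_ideal K R1 \<and> I1 \<subseteq> K \<and> K \<noteq> carrier R1"
        have lb: "left_ideal (box K I2) R" using box_left_ideal[OF _ li2] K by blast
        have "box K I2 \<noteq> carrier R"
        proof
          assume "box K I2 = carrier R"
          hence "\<one>\<^bsub>R\<^esub> \<in> box K I2" by simp
          thus False using one_notin[OF R1.ring_axioms, of K] K by (simp add: Rs)
        qed
        hence eq: "box K I2 = L" using Lmax[OF lb Lsub] K by blast
        show "K = I1"
        proof
          show "K \<subseteq> I1"
          proof
            fix k assume "k \<in> K"
            hence "(k, \<zero>\<^bsub>M\<^esub>, \<zero>\<^bsub>P\<^esub>, \<zero>\<^bsub>R2\<^esub>) \<in> box K I2" using z2 by simp
            thus "k \<in> I1" using eq fwd by blast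
          qed
        qed (use K in blast)
      qed
      thus ?thesis using aJ unfolding jacobson_def by blast
    qed
    moreover have "b \<in> I2"
    proof (cases "I2 = carrier R2")
      case True thus ?thesis using c by simp
    next
      case False
      have "maximal_left_ideal I2 R2" unfolding maximal_left_ideal_def
      proof (intro conjI allI impI li2 False)
        fix K assume K: "left_ideal K R2 \<and> I2 \<subseteq> K \<and> K \<noteq> carrier R2"
        have lb: "left_ideal (box I1 K) R" using box_left_ideal[OF li1] K by blast
        have "box I1 K \<noteq> carrier R"
        proof
          assume "box I1 K = carrier R"
          hence "\<one>\<^bsub>R\<^esub> \<in> box I1 K" by simp
          thus False using one_notin[OF R2.ring_axioms, of K] K by (simp add: Rs)
        qed
        hence eq: "box I1 K = L" using Lmax[OF lb Lsub] K by blast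
        show "K = I2"
        proof
          show "K \<subseteq> I2"
          proof
            fix k assume "k \<in> K"
            hence "(\<zero>\<^bsub>R1\<^esub>, \<zero>\<^bsub>M\<^esub>, \<zero>\<^bsub>P\<^esub>, k) \<in> box I1 K" using z1 by simp
            thus "k \<in> I2" using eq fwd by blast
          qed
        qed (use K in blast)
      qed
      thus ?thesis using bJ unfolding jacobson_def by blast
    qed
    ultimately show "x \<in> L" using bwd c xe by blast
  qed
  thus ?thesis using x unfolding jacobson_def by blast
qed


lemma zero_nil: "ring S \<Longrightarrow> \<zero>\<^bsub>S\<^esub> \<in> nilpotents S"
  unfolding nilpotents_def by (rule CollectI, intro conjI exI[of _ "1::nat"]) (auto simp: ring.ring_simprules)

lemma main_fwd:
  assumes NJ: "NJ_symmetric R"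
  shows "NJ_symmetric R1 \<and> NJ_symmetric R2"
proof
  show "NJ_symmetric R1" unfolding NJ_symmetric_def
  proof (intro ballI impI)
    fix a b c assume c: "a \<in> carrier R1" "b \<in> carrier R1" "c \<in> carrier R1"
      and n: "a \<otimes>\<^bsub>R1\<^esub> b \<otimes>\<^bsub>R1\<^esub> c \<in> nilpotents R1"
    let ?x = "(a, \<zero>\<^bsub>M\<^esub>, \<zero>\<^bsub>P\<^esub>, \<zero>\<^bsub>R2\<^esub>)" and ?y = "(b, \<zero>\<^bsub>M\<^esub>, \<zero>\<^bsub>P\<^esub>, \<zero>\<^bsub>R2\<^esub>)"
      and ?z = "(c, \<zero>\<^bsub>M\<^esub>, \<zero>\<^bsub>P\<^esub>, \<zero>\<^bsub>R2\<^esub>)"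
    have e1: "?x \<otimes>\<^bsub>R\<^esub> ?y \<otimes>\<^bsub>R\<^esub> ?z = (a \<otimes>\<^bsub>R1\<^esub> b \<otimes>\<^bsub>R1\<^esub> c, \<zero>\<^bsub>M\<^esub>, \<zero>\<^bsub>P\<^esub>, \<zero>\<^bsub>R2\<^esub>)"
      using c by (simp add: Rs)
    have e2: "?y \<otimes>\<^bsub>R\<^esub> ?x \<otimes>\<^bsub>R\<^esub> ?z = (b \<otimes>\<^bsub>R1\<^esub> a \<otimes>\<^bsub>R1\<^esub> c, \<zero>\<^bsub>M\<^esub>, \<zero>\<^bsub>P\<^esub>, \<zero>\<^bsub>R2\<^esub>)"
      using c by (simp add: Rs)
    have "?x \<otimes>\<^bsub>R\<^esub> ?y \<otimes>\<^bsub>R\<^esub> ?z \<in> nilpotents R"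
      unfolding e1 using nil_char[of "(a \<otimes>\<^bsub>R1\<^esub> b \<otimes>\<^bsub>R1\<^esub> c, \<zero>\<^bsub>M\<^esub>, \<zero>\<^bsub>P\<^esub>, \<zero>\<^bsub>R2\<^esub>)"] c n
        zero_nil[OF R2.ring_axioms] by simp
    hence "?y \<otimes>\<^bsub>R\<^esub> ?x \<otimes>\<^bsub>R\<^esub> ?z \<in> jacobson R"
      using NJ c unfolding NJ_symmetric_def by simp
    thus "b \<otimes>\<^bsub>R1\<^esub> a \<otimes>\<^bsub>R1\<^esub> c \<in> jacobson R1" unfolding e2 by (rule J_to1)
  qed
  show "NJ_symmetric R2" unfolding NJ_symmetric_def
  proof (intro ballI impI)
    fix a b c assume c: "a \<in> carrier R2" "b \<in> carrier R2" "c \<in> carrier R2"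
      and n: "a \<otimes>\<^bsub>R2\<^esub> b \<otimes>\<^bsub>R2\<^esub> c \<in> nilpotents R2"
    let ?x = "(\<zero>\<^bsub>R1\<^esub>, \<zero>\<^bsub>M\<^esub>, \<zero>\<^bsub>P\<^esub>, a)" and ?y = "(\<zero>\<^bsub>R1\<^esub>, \<zero>\<^bsub>M\<^esub>, \<zero>\<^bsub>P\<^esub>, b)"
      and ?z = "(\<zero>\<^bsub>R1\<^esub>, \<zero>\<^bsub>M\<^esub>, \<zero>\<^bsub>P\<^esub>, c)"
    have e1: "?x \<otimes>\<^bsub>R\<^esub> ?y \<otimes>\<^bsub>R\<^esub> ?z = (\<zero>\<^bsub>R1\<^esub>, \<zero>\<^bsub>M\<^esub>, \<zero>\<^bsub>P\<^esub>, a \<otimes>\<^bsub>R2\<^esub> b \<otimes>\<^bsub>R2\<^esub> c)"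
      using c by (simp add: Rs)
    have e2: "?y \<otimes>\<^bsub>R\<^esub> ?x \<otimes>\<^bsub>R\<^esub> ?z = (\<zero>\<^bsub>R1\<^esub>, \<zero>\<^bsub>M\<^esub>, \<zero>\<^bsub>P\<^esub>, b \<otimes>\<^bsub>R2\<^esub> a \<otimes>\<^bsub>R2\<^esub> c)"
      using c by (simp add: Rs)
    have "?x \<otimes>\<^bsub>R\<^esub> ?y \<otimes>\<^bsub>R\<^esub> ?z \<in> nilpotents R"
      unfolding e1 using nil_char[of "(\<zero>\<^bsub>R1\<^esub>, \<zero>\<^bsub>M\<^esub>, \<zero>\<^bsub>P\<^esub>, a \<otimes>\<^bsub>R2\<^esub> b \<otimes>\<^bsub>R2\<^esub> c)"] c n
        zero_nil[OF R1.ring_axioms] by simp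
    hence "?y \<otimes>\<^bsub>R\<^esub> ?x \<otimes>\<^bsub>R\<^esub> ?z \<in> jacobson R"
      using NJ c unfolding NJ_symmetric_def by simp
    thus "b \<otimes>\<^bsub>R2\<^esub> a \<otimes>\<^bsub>R2\<^esub> c \<in> jacobson R2" unfolding e2 by (rule J_to2)
  qed
qed

lemma main_bwd:
  assumes NJ1: "NJ_symmetric R1" and NJ2: "NJ_symmetric R2"
  shows "NJ_symmetric R"
  unfolding NJ_symmetric_def
proof (intro ballI impI)
  fix x y z assume xc: "x \<in> carrier R" and yc: "y \<in> carrier R" and zc: "z \<in> carrier R"
    and n: "x \<otimes>\<^bsub>R\<^esub> y \<otimes>\<^bsub>R\<^esub> z \<in> nilpotents R"
  obtain a m p b where xe: "x = (a, m, p, b)" by (cases x) auto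
  obtain a' m' p' b' where ye: "y = (a', m', p', b')" by (cases y) auto
  obtain a'' m'' p'' b'' where ze: "z = (a'', m'', p'', b'')" by (cases z) auto
  have c: "a \<in> carrier R1" "m \<in> carrier M" "p \<in> carrier P" "b \<in> carrier R2"
    "a' \<in> carrier R1" "m' \<in> carrier M" "p' \<in> carrier P" "b' \<in> carrier R2"
    "a'' \<in> carrier R1" "m'' \<in> carrier M" "p'' \<in> carrier P" "b'' \<in> carrier R2"
    using xc yc zc xe ye ze by auto
  have xyz: "x \<otimes>\<^bsub>R\<^esub> y \<otimes>\<^bsub>R\<^esub> z \<in> carrier R" using xc yc zc by simp
  have yxz: "y \<otimes>\<^bsub>R\<^esub> x \<otimes>\<^bsub>R\<^esub> z \<in> carrier R" using xc yc zc by simp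
  have "fst (x \<otimes>\<^bsub>R\<^esub> y \<otimes>\<^bsub>R\<^esub> z) \<in> nilpotents R1 \<and> snd (snd (snd (x \<otimes>\<^bsub>R\<^esub> y \<otimes>\<^bsub>R\<^esub> z))) \<in> nilpotents R2"
    using nil_char[OF xyz] n by blast
  hence n1: "a \<otimes>\<^bsub>R1\<^esub> a' \<otimes>\<^bsub>R1\<^esub> a'' \<in> nilpotents R1" and n2: "b \<otimes>\<^bsub>R2\<^esub> b' \<otimes>\<^bsub>R2\<^esub> b'' \<in> nilpotents R2"
    using xe ye ze by (simp_all add: Rs)
  have j1: "a' \<otimes>\<^bsub>R1\<^esub> a \<otimes>\<^bsub>R1\<^esub> a'' \<in> jacobson R1" using NJ1 n1 c unfolding NJ_symmetric_def by blast
  have j2: "b' \<otimes>\<^bsub>R2\<^esub> b \<otimes>\<^bsub>R2\<^esub> b'' \<in> jacobson R2" using NJ2 n2 c unfolding NJ_symmetric_def by blast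
  show "y \<otimes>\<^bsub>R\<^esub> x \<otimes>\<^bsub>R\<^esub> z \<in> jacobson R"
    by (rule J_from[OF yxz]) (use j1 j2 xe ye ze in \<open>simp_all add: Rs\<close>)
qed

end

theorem proposition2p21:
  fixes R1 :: "('a, 'c) ring_scheme" and R2 :: "('b, 'd) ring_scheme"
    and M :: "('m, 'e) ring_scheme" and P :: "('p, 'f) ring_scheme"
    and lM :: "'a \<Rightarrow> 'm \<Rightarrow> 'm" and rM :: "'m \<Rightarrow> 'b \<Rightarrow> 'm"
    and lP :: "'b \<Rightarrow> 'p \<Rightarrow> 'p" and rP :: "'p \<Rightarrow> 'a \<Rightarrow> 'p"
  assumes "ring R1" and "ring R2"
    and "bimodule R1 R2 M lM rM"
    and "bimodule R2 R1 P lP rP"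
  shows "NJ_symmetric (morita_ring R1 R2 M P lM rM lP rP) \<longleftrightarrow>
         NJ_symmetric R1 \<and> NJ_symmetric R2"
proof -
  interpret mctx R1 R2 M P lM rM lP rP
    unfolding mctx_def mctx_axioms_def using assms by blast
  show ?thesis using main_fwd main_bwd by blast
qed

end
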